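(* Let $A \in \mathbb{R}^{n \times m}$, let $x \in \mathbb{R}^m$ have support $\mathcal{N}$, let $y := Ax$, and let $\mathcal{T} \subseteq \{1,\dots,m\}$ with $|\mathcal{T}| = k$, and set $\Delta_u := \mathcal{N} \setminus \mathcal{T}$, $u := |\Delta_u|$. Suppose the partial RIC $\delta_{2u}^{k}$ of $A$ exists (in particular $A_{\mathcal{T}'}$ has full column rank for every $\mathcal{T}'$ with $|\mathcal{T}'| = k$) and satisfies $\delta_{2u}^{k} < \sqrt{2} - 1$. Then $x$ is the unique solution of the modified-CS program $\min_b \|b_{\mathcal{T}^c}\|_1$ subject to $y = Ab$.
   Context: For a vector $v$ and index set $S$, $v_S$ denotes the subvector indexed by $S$; for a matrix $A$, $A_S$ denotes the submatrix of columns indexed by $S$; $\mathcal{T}^c$ is the complement of $\mathcal{T}$ in $\{1,\dots,m\}$. For a set $\mathcal{T}$ with $A_{\mathcal{T}}$ of full column rank, $\mathcal{P}_{\mathcal{T},\perp} := I - A_{\mathcal{T}}(A_{\mathcal{T}}'A_{\mathcal{T}})^{-1}A_{\mathcal{T}}'$. The partial RIC $\delta_u^{k}$ of $A$ is defined when $A_{\mathcal{T}}$ has full column rank for every set $\mathcal{T}$ of size $k$, as the smallest real number $\delta$ such that $(1-\delta)\|b\|_2^2 \le \|\mathcal{P}_{\mathcal{T},\perp} A_{\mathcal{T}^c} b\|_2^2 \le (1+\delta)\|b\|_2^2$ for all sets $\mathcal{T}$ of size $k$ and all vectors $b \in \mathbb{R}^{m-k}$ with at most $u$ nonzero entries. 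*)

theory Defs
  imports "HOL-Analysis.Analysis"
begin

text \<open>Matrices A in R^(n x m) are represented as real^'m^'n (rows indexed by 'n,
columns by 'm); column index sets are subsets of UNIV :: 'm set.\<close>

text \<open>A_S b for b supported on S: the linear combination of the columns indexed by S.\<close>
definition colcomb :: "real^'m^'n \<Rightarrow> 'm set \<Rightarrow> ('m \<Rightarrow> real) \<Rightarrow> real^'n" where
  "colcomb A S b = (\<Sum>j\<in>S. b j *\<^sub>R column j A)"

definition full_col_rank :: "real^'m^'n \<Rightarrow> 'm set \<Rightarrow> bool" where
  "full_col_rank A S \<longleftrightarrow> (\<forall>c. colcomb A S c = 0 \<longrightarrow> (\<forall>j\<in>S. c j = 0))"

text \<open>P_{T,perp} v = v - A_T (A_T' A_T)^{-1} A_T' v, where c = (A_T' A_T)^{-1} A_T' v is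
the unique solution (supported on T) of the normal equations A_T' A_T c = A_T' v.\<close>
definition proj_perp :: "real^'m^'n \<Rightarrow> 'm set \<Rightarrow> real^'n \<Rightarrow> real^'n" where
  "proj_perp A T v =
     v - colcomb A T (THE c. (\<forall>j. j \<notin> T \<longrightarrow> c j = 0) \<and>
                            (\<forall>i\<in>T. inner (column i A) (colcomb A T c) = inner (column i A) v))"

definition partial_RIC_exists :: "real^'m^'n \<Rightarrow> nat \<Rightarrow> bool" where
  "partial_RIC_exists A k \<longleftrightarrow> (\<forall>T::'m set. card T = k \<longrightarrow> full_col_rank A T)"

definition partial_RIC_ok :: "real^'m^'n \<Rightarrow> nat \<Rightarrow> nat \<Rightarrow> real \<Rightarrow> bool" where
  "partial_RIC_ok A k u \<delta> \<longleftrightarrow>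
     (\<forall>(T::'m set) (b::'m \<Rightarrow> real). card T = k \<longrightarrow> (\<forall>j\<in>T. b j = 0) \<longrightarrow>
        card {j. b j \<noteq> 0} \<le> u \<longrightarrow>
        (1 - \<delta>) * (\<Sum>j\<in>-T. (b j)\<^sup>2) \<le> (norm (proj_perp A T (colcomb A (-T) b)))\<^sup>2 \<and>
        (norm (proj_perp A T (colcomb A (-T) b)))\<^sup>2 \<le> (1 + \<delta>) * (\<Sum>j\<in>-T. (b j)\<^sup>2))"

definition partial_RIC :: "real^'m^'n \<Rightarrow> nat \<Rightarrow> nat \<Rightarrow> real" where
  "partial_RIC A k u = Inf {\<delta>. partial_RIC_ok A k u \<delta>}"

end

theory Submission
  imports Defs
begin


definition NE :: "real^'m^'n \<Rightarrow> 'm set \<Rightarrow> real^'n \<Rightarrow> ('m \<Rightarrow> real) \<Rightarrow> bool" where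
  "NE A T v c \<longleftrightarrow> (\<forall>j. j \<notin> T \<longrightarrow> c j = 0) \<and>
      (\<forall>i\<in>T. inner (column i A) (colcomb A T c) = inner (column i A) v)"

lemma proj_perp_NE: "proj_perp A T v = v - colcomb A T (THE c. NE A T v c)"
  unfolding proj_perp_def NE_def by simp

lemma colcomb_add: "colcomb A S (\<lambda>j. b1 j + b2 j) = colcomb A S b1 + colcomb A S b2"
  unfolding colcomb_def by (simp add: scaleR_add_left sum.distrib)

lemma colcomb_diff: "colcomb A S (\<lambda>j. b1 j - b2 j) = colcomb A S b1 - colcomb A S b2"
  unfolding colcomb_def by (simp add: scaleR_diff_left sum_subtractf)

lemma colcomb_scale: "colcomb A S (\<lambda>j. r * b j) = r *\<^sub>R colcomb A S b"
  unfolding colcomb_def by (simp add: scaleR_sum_right)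

lemma colcomb_zero: "colcomb A S (\<lambda>j. 0) = 0"
  unfolding colcomb_def by simp

lemma colcomb_cong: "(\<And>j. j \<in> S \<Longrightarrow> b1 j = b2 j) \<Longrightarrow> colcomb A S b1 = colcomb A S b2"
  unfolding colcomb_def by (rule sum.cong) auto

lemma inner_colcomb: "inner w (colcomb A S c) = (\<Sum>j\<in>S. c j * inner w (column j A))"
  unfolding colcomb_def by (simp add: inner_sum_right)

lemma inner_colcomb_left: "inner (colcomb A S c) w = (\<Sum>j\<in>S. c j * inner (column j A) w)"
  unfolding colcomb_def by (simp add: inner_sum_left)

lemma mult_colcomb: "A *v v = colcomb A UNIV (\<lambda>j. v $ j)"
  unfolding colcomb_def matrix_mult_sum by (simp add: scalar_mult_eq_scaleR)

lemma colcomb_split: "colcomb A UNIV b = colcomb A T b + colcomb A (-T) b"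
  unfolding colcomb_def
  by (subst sum.union_disjoint[symmetric]) auto

lemma NE_unique:
  assumes fr: "full_col_rank A T" and 1: "NE A T v c1" and 2: "NE A T v c2"
  shows "c1 = c2"
proof -
  define d where "d = (\<lambda>j. c1 j - c2 j)"
  define w where "w = colcomb A T d"
  have w: "w = colcomb A T c1 - colcomb A T c2" unfolding w_def d_def by (rule colcomb_diff)
  have "inner w w = (\<Sum>j\<in>T. d j * inner (column j A) w)"
    using inner_colcomb_left[of A T d w, folded w_def] .
  also have "\<dots> = 0"
    using 1 2 unfolding NE_def w by (simp add: inner_diff_right)
  finally have "w = 0" by simp
  hence "\<forall>j\<in>T. d j = 0" using fr unfolding full_col_rank_def w_def by blast
  moreover have "\<forall>j. j \<notin> T \<longrightarrow> d j = 0" using 1 2 unfolding NE_def d_def by simp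
  ultimately show ?thesis unfolding d_def by (metis eq_iff_diff_eq_0 ext)
qed

lemma NE_exists:
  "\<exists>c. NE A T v c"
proof -
  obtain y z where y: "y \<in> span ((\<lambda>i. column i A) ` T)" and z: "\<And>w. w \<in> span ((\<lambda>i. column i A) ` T) \<Longrightarrow> orthogonal z w"
    and v: "v = y + z"
    by (rule orthogonal_subspace_decomp_exists[of "(\<lambda>i. column i A) ` T" v]) auto
  have sub: "subspace (range (colcomb A T))"
    unfolding subspace_def
  proof (intro conjI ballI allI)
    have "0 = colcomb A T (\<lambda>j. 0)" by (simp add: colcomb_zero)
    thus "0 \<in> range (colcomb A T)" by auto
    fix p q assume "p \<in> range (colcomb A T)" "q \<in> range (colcomb A T)"
    then obtain c1 c2 where "p = colcomb A T c1" "q = colcomb A T c2" by blast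
    hence "p + q = colcomb A T (\<lambda>j. c1 j + c2 j)" by (simp add: colcomb_add)
    thus "p + q \<in> range (colcomb A T)" by auto
  next
    fix r and p assume "p \<in> range (colcomb A T)"
    then obtain c1 where "p = colcomb A T c1" by blast
    hence "r *\<^sub>R p = colcomb A T (\<lambda>j. r * c1 j)" by (simp add: colcomb_scale)
    thus "r *\<^sub>R p \<in> range (colcomb A T)" by auto
  qed
  have gen: "(\<lambda>i. column i A) ` T \<subseteq> range (colcomb A T)"
  proof
    fix w assume "w \<in> (\<lambda>i. column i A) ` T"
    then obtain i where i: "i \<in> T" "w = column i A" by blast
    have "colcomb A T (\<lambda>j. if j = i then 1 else 0) = (\<Sum>j\<in>T. if j = i then column j A else 0)"
      unfolding colcomb_def by (rule sum.cong) auto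
    also have "\<dots> = column i A" using i(1) by (simp add: sum.delta)
    finally have "colcomb A T (\<lambda>j. if j = i then 1 else 0) = column i A" .
    thus "w \<in> range (colcomb A T)" using i(2) by (auto intro!: image_eqI[where x="\<lambda>j. if j = i then 1 else 0"])
  qed
  have "span ((\<lambda>i. column i A) ` T) \<subseteq> range (colcomb A T)" by (rule span_minimal[OF gen sub])
  with y obtain c0 where c0: "y = colcomb A T c0" by auto
  define c where "c = (\<lambda>j. if j \<in> T then c0 j else 0)"
  have cc: "colcomb A T c = y" unfolding c0 by (rule colcomb_cong) (simp add: c_def)
  have "NE A T v c"
    unfolding NE_def
  proof (intro conjI allI impI ballI)
    fix j assume "j \<notin> T" thus "c j = 0" by (simp add: c_def)
  next
    fix i assume i: "i \<in> T"
    have "column i A \<in> span ((\<lambda>i. column i A) ` T)" by (rule span_base) (use i in auto)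
    hence "orthogonal z (column i A)" by (rule z)
    hence "inner (column i A) z = 0" by (simp add: orthogonal_def inner_commute)
    thus "inner (column i A) (colcomb A T c) = inner (column i A) v"
      unfolding cc v by (simp add: inner_add_right)
  qed
  thus ?thesis by blast
qed

lemma NE_ex1: assumes "full_col_rank A T" shows "\<exists>!c. NE A T v c"
proof -
  obtain c where c: "NE A T v c" using NE_exists by blast
  show ?thesis
  proof (rule ex1I[of _ c])
    show "NE A T v c" by (rule c)
    fix c' assume "NE A T v c'" thus "c' = c" using NE_unique[OF assms _ c] by blast
  qed
qed

lemma NE_the: "full_col_rank A T \<Longrightarrow> NE A T v (THE c. NE A T v c)"
  by (rule theI'[OF NE_ex1])

lemma NE_the_eq: "full_col_rank A T \<Longrightarrow> NE A T v c \<Longrightarrow> (THE c. NE A T v c) = c"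
  by (rule the1_equality[OF NE_ex1])

lemma proj_add:
  assumes fr: "full_col_rank A T"
  shows "proj_perp A T (v1 + v2) = proj_perp A T v1 + proj_perp A T v2"
proof -
  let ?c1 = "THE c. NE A T v1 c" and ?c2 = "THE c. NE A T v2 c"
  have 1: "NE A T v1 ?c1" "NE A T v2 ?c2" using NE_the[OF fr] by auto
  have "NE A T (v1 + v2) (\<lambda>j. ?c1 j + ?c2 j)"
    using 1 unfolding NE_def by (simp add: colcomb_add inner_add_right)
  hence "(THE c. NE A T (v1+v2) c) = (\<lambda>j. ?c1 j + ?c2 j)" by (rule NE_the_eq[OF fr])
  thus ?thesis unfolding proj_perp_NE by (simp add: colcomb_add algebra_simps)
qed

lemma proj_scale:
  assumes fr: "full_col_rank A T"
  shows "proj_perp A T (r *\<^sub>R v) = r *\<^sub>R proj_perp A T v"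
proof -
  let ?c1 = "THE c. NE A T v c"
  have 1: "NE A T v ?c1" using NE_the[OF fr] by auto
  have "NE A T (r *\<^sub>R v) (\<lambda>j. r * ?c1 j)"
    using 1 unfolding NE_def by (simp add: colcomb_scale)
  hence "(THE c. NE A T (r *\<^sub>R v) c) = (\<lambda>j. r * ?c1 j)" by (rule NE_the_eq[OF fr])
  thus ?thesis unfolding proj_perp_NE by (simp add: colcomb_scale algebra_simps)
qed

lemma proj_kill:
  assumes fr: "full_col_rank A T"
  shows "proj_perp A T (colcomb A T c0) = 0"
proof -
  define c where "c = (\<lambda>j. if j \<in> T then c0 j else 0)"
  have cc: "colcomb A T c = colcomb A T c0" by (rule colcomb_cong) (simp add: c_def)
  have "NE A T (colcomb A T c0) c" unfolding NE_def cc by (simp add: c_def)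
  hence "(THE c. NE A T (colcomb A T c0) c) = c" by (rule NE_the_eq[OF fr])
  thus ?thesis unfolding proj_perp_NE using cc by simp
qed

lemma proj_orth:
  assumes fr: "full_col_rank A T"
  shows "inner (proj_perp A T v) (colcomb A T c') = 0"
proof -
  let ?c1 = "THE c. NE A T v c"
  have 1: "NE A T v ?c1" using NE_the[OF fr] by auto
  have "inner (proj_perp A T v) (colcomb A T c') = (\<Sum>j\<in>T. c' j * inner (proj_perp A T v) (column j A))"
    by (rule inner_colcomb)
  also have "\<dots> = (\<Sum>j\<in>T. c' j * 0)"
  proof (rule sum.cong)
    fix j assume j: "j \<in> T"
    have e: "inner (column j A) (colcomb A T ?c1) = inner (column j A) v" using 1 j unfolding NE_def by blast
    have "inner (proj_perp A T v) (column j A) = inner (column j A) v - inner (column j A) (colcomb A T ?c1)"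
      unfolding proj_perp_NE inner_diff_left by (simp add: inner_commute)
    thus "c' j * inner (proj_perp A T v) (column j A) = c' j * 0" using e by simp
  qed simp
  finally show ?thesis by simp
qed

lemma proj_norm:
  assumes fr: "full_col_rank A T"
  shows "norm (proj_perp A T v) \<le> norm v"
proof -
  let ?c1 = "THE c. NE A T v c"
  define p where "p = proj_perp A T v"
  define q where "q = colcomb A T ?c1"
  have v: "v = p + q" unfolding p_def q_def proj_perp_NE by simp
  have o: "inner p q = 0" unfolding p_def q_def by (rule proj_orth[OF fr])
  have "(norm v)\<^sup>2 = (norm p)\<^sup>2 + (norm q)\<^sup>2"
    unfolding v by (rule norm_add_Pythagorean) (simp add: o orthogonal_def)
  hence "(norm p)\<^sup>2 \<le> (norm v)\<^sup>2" by simp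
  thus ?thesis unfolding p_def by (rule power2_le_imp_le) simp
qed



definition Bv :: "real^'m^'n \<Rightarrow> 'm set \<Rightarrow> ('m \<Rightarrow> real) \<Rightarrow> real^'n" where
  "Bv A T b = proj_perp A T (colcomb A (-T) b)"

definition nq :: "('m::finite) set \<Rightarrow> ('m \<Rightarrow> real) \<Rightarrow> real" where
  "nq T b = (\<Sum>j\<in>-T. (b j)\<^sup>2)"

lemma Bv_add: "full_col_rank A T \<Longrightarrow> Bv A T (\<lambda>j. b1 j + b2 j) = Bv A T b1 + Bv A T b2"
  unfolding Bv_def colcomb_add by (rule proj_add)

lemma Bv_scale: "full_col_rank A T \<Longrightarrow> Bv A T (\<lambda>j. r * b j) = r *\<^sub>R Bv A T b"
  unfolding Bv_def colcomb_scale by (rule proj_scale)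

lemma Bv_diff: "full_col_rank A T \<Longrightarrow> Bv A T (\<lambda>j. b1 j - b2 j) = Bv A T b1 - Bv A T b2"
proof -
  assume fr: "full_col_rank A T"
  have "Bv A T (\<lambda>j. b1 j - b2 j) = Bv A T (\<lambda>j. b1 j + (-1) * b2 j)" by simp
  also have "\<dots> = Bv A T b1 + Bv A T (\<lambda>j. (-1) * b2 j)" by (rule Bv_add[OF fr])
  also have "\<dots> = Bv A T b1 - Bv A T b2" using Bv_scale[OF fr, of "-1" b2] by simp
  finally show ?thesis .
qed

lemma Bv_zero: "full_col_rank A T \<Longrightarrow> Bv A T (\<lambda>j. 0) = 0"
  using Bv_scale[of A T 0 "\<lambda>j. 0"] by simp

lemma Bv_cong: "(\<And>j. j \<in> -T \<Longrightarrow> b1 j = b2 j) \<Longrightarrow> Bv A T b1 = Bv A T b2"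
  unfolding Bv_def by (metis colcomb_cong)

lemma Bv_sum_list: "full_col_rank A T \<Longrightarrow> Bv A T (\<lambda>j. sum_list (map (\<lambda>Q. f Q j) Qs)) = sum_list (map (\<lambda>Q. Bv A T (f Q)) Qs)"
proof (induction Qs)
  case Nil thus ?case using Bv_zero[of A T] by simp
next
  case (Cons a Qs) thus ?case using Bv_add[of A T "f a" "\<lambda>j. sum_list (map (\<lambda>Q. f Q j) Qs)"] by simp
qed

lemma Bv_null:
  assumes fr: "full_col_rank A T" and h: "A *v hv = 0"
  shows "Bv A T (\<lambda>j. hv $ j) = 0"
proof -
  have "0 = colcomb A T (\<lambda>j. hv $ j) + colcomb A (-T) (\<lambda>j. hv $ j)"
    using h unfolding mult_colcomb colcomb_split[of A _ T] by simp
  hence "colcomb A (-T) (\<lambda>j. hv $ j) = (-1) *\<^sub>R colcomb A T (\<lambda>j. hv $ j)"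
    by (simp add: eq_neg_iff_add_eq_0 add.commute)
  also have "\<dots> = colcomb A T (\<lambda>j. (-1) * hv $ j)" by (rule colcomb_scale[symmetric])
  finally show ?thesis unfolding Bv_def using proj_kill[OF fr] by simp
qed

lemma ric_apply:
  assumes "partial_RIC_ok A k s \<delta>" "card T = k" "\<forall>j\<in>T. b j = 0" "card {j. b j \<noteq> 0} \<le> s"
  shows "(1 - \<delta>) * nq T b \<le> (norm (Bv A T b))\<^sup>2 \<and> (norm (Bv A T b))\<^sup>2 \<le> (1 + \<delta>) * nq T b"
  using assms unfolding partial_RIC_ok_def Bv_def nq_def by blast

lemma nq_zero:
  assumes "nq T b = 0" shows "\<forall>j\<in>-T. b j = 0"
proof -
  have "\<forall>j\<in>-T. (b j)\<^sup>2 = 0"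
    using assms unfolding nq_def by (subst (asm) sum_nonneg_eq_0_iff) auto
  thus ?thesis by simp
qed

lemma nq_nonneg: "0 \<le> nq T b" unfolding nq_def by (simp add: sum_nonneg)

lemma aux_ineq: "(a::real) \<le> (1 + d) * 2 \<Longrightarrow> (1 - d) * 2 \<le> b \<Longrightarrow> 4 * i = a - b \<Longrightarrow> i \<le> d"
  by (smt (verit))

lemma polar:
  assumes fr: "full_col_rank A T"
    and ok: "partial_RIC_ok A k (2 * s) \<delta>" and cT: "card T = k"
    and z1: "\<forall>j\<in>T. b1 j = 0" and z2: "\<forall>j\<in>T. b2 j = 0"
    and c1: "card {j. b1 j \<noteq> 0} \<le> s" and c2: "card {j. b2 j \<noteq> 0} \<le> s"
    and dj: "\<forall>j. b1 j = 0 \<or> b2 j = 0"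
  shows "\<bar>inner (Bv A T b1) (Bv A T b2)\<bar> \<le> \<delta> * sqrt (nq T b1) * sqrt (nq T b2)"
proof (cases "nq T b1 = 0 \<or> nq T b2 = 0")
  case True
  have "Bv A T b1 = 0 \<or> Bv A T b2 = 0"
  proof (cases "nq T b1 = 0")
    case True
    hence "Bv A T b1 = Bv A T (\<lambda>j. 0)" using nq_zero by (metis Bv_cong)
    thus ?thesis using Bv_zero[OF fr] by simp
  next
    case False
    hence "nq T b2 = 0" using \<open>nq T b1 = 0 \<or> nq T b2 = 0\<close> by simp
    hence "Bv A T b2 = Bv A T (\<lambda>j. 0)" using nq_zero by (metis Bv_cong)
    thus ?thesis using Bv_zero[OF fr] by simp
  qed
  thus ?thesis using True by auto
next
  case False
  define n1 where "n1 = sqrt (nq T b1)"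
  define n2 where "n2 = sqrt (nq T b2)"
  have n1: "n1 > 0" using False nq_nonneg[of T b1] unfolding n1_def by simp
  have n2: "n2 > 0" using False nq_nonneg[of T b2] unfolding n2_def by simp
  define e1 where "e1 = (\<lambda>j. b1 j / n1)"
  define e2 where "e2 = (\<lambda>j. b2 j / n2)"
  have b1e: "b1 = (\<lambda>j. n1 * e1 j)" using n1 unfolding e1_def by auto
  have b2e: "b2 = (\<lambda>j. n2 * e2 j)" using n2 unfolding e2_def by auto
  have ne1: "nq T e1 = 1"
  proof -
    have "nq T e1 = nq T b1 / n1\<^sup>2" unfolding nq_def e1_def
      by (simp add: power_divide sum_divide_distrib)
    also have "\<dots> = 1" using n1 nq_nonneg[of T b1] unfolding n1_def by simp
    finally show ?thesis .
  qed
  have ne2: "nq T e2 = 1"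
  proof -
    have "nq T e2 = nq T b2 / n2\<^sup>2" unfolding nq_def e2_def
      by (simp add: power_divide sum_divide_distrib)
    also have "\<dots> = 1" using n2 nq_nonneg[of T b2] unfolding n2_def by simp
    finally show ?thesis .
  qed
  have prod0: "\<And>j. e1 j * e2 j = 0" using dj unfolding e1_def e2_def by auto
  have sup1: "{j. e1 j \<noteq> 0} = {j. b1 j \<noteq> 0}" using n1 unfolding e1_def by auto
  have sup2: "{j. e2 j \<noteq> 0} = {j. b2 j \<noteq> 0}" using n2 unfolding e2_def by auto
  have cardpm: "card {j. e1 j + r * e2 j \<noteq> 0} \<le> 2 * s" for r
  proof -
    have "{j. e1 j + r * e2 j \<noteq> 0} \<subseteq> {j. b1 j \<noteq> 0} \<union> {j. b2 j \<noteq> 0}"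
      unfolding e1_def e2_def by auto
    hence "card {j. e1 j + r * e2 j \<noteq> 0} \<le> card ({j. b1 j \<noteq> 0} \<union> {j. b2 j \<noteq> 0})"
      by (intro card_mono) auto
    also have "\<dots> \<le> card {j. b1 j \<noteq> 0} + card {j. b2 j \<noteq> 0}" by (rule card_Un_le)
    finally show ?thesis using c1 c2 by linarith
  qed
  have nqpm: "nq T (\<lambda>j. e1 j + r * e2 j) = 1 + r\<^sup>2" for r
  proof -
    have "nq T (\<lambda>j. e1 j + r * e2 j) = (\<Sum>j\<in>-T. (e1 j)\<^sup>2 + r\<^sup>2 * (e2 j)\<^sup>2 + 2 * r * (e1 j * e2 j))"
      unfolding nq_def by (rule sum.cong) (auto simp: power2_eq_square algebra_simps)
    also have "\<dots> = nq T e1 + r\<^sup>2 * nq T e2" unfolding nq_def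
      by (simp add: prod0 sum.distrib sum_distrib_left)
    finally show ?thesis using ne1 ne2 by simp
  qed
  have zpm: "\<forall>j\<in>T. e1 j + r * e2 j = 0" for r using z1 z2 unfolding e1_def e2_def by simp
  have Bpm: "Bv A T (\<lambda>j. e1 j + r * e2 j) = Bv A T e1 + r *\<^sub>R Bv A T e2" for r
    using Bv_add[OF fr, of e1 "\<lambda>j. r * e2 j"] Bv_scale[OF fr] by simp
  have up: "(norm (Bv A T e1 + Bv A T e2))\<^sup>2 \<le> (1 + \<delta>) * 2"
    using ric_apply[OF ok cT zpm[of 1] cardpm[of 1]] Bpm[of 1] nqpm[of 1] by simp
  have lo: "(1 - \<delta>) * 2 \<le> (norm (Bv A T e1 - Bv A T e2))\<^sup>2"
    using ric_apply[OF ok cT zpm[of "-1"] cardpm[of "-1"]] Bpm[of "-1"] nqpm[of "-1"] by simp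
  have up2: "(norm (Bv A T e1 - Bv A T e2))\<^sup>2 \<le> (1 + \<delta>) * 2"
    using ric_apply[OF ok cT zpm[of "-1"] cardpm[of "-1"]] Bpm[of "-1"] nqpm[of "-1"] by simp
  have lo2: "(1 - \<delta>) * 2 \<le> (norm (Bv A T e1 + Bv A T e2))\<^sup>2"
    using ric_apply[OF ok cT zpm[of 1] cardpm[of 1]] Bpm[of 1] nqpm[of 1] by simp
  have id: "4 * inner (Bv A T e1) (Bv A T e2) = (norm (Bv A T e1 + Bv A T e2))\<^sup>2 - (norm (Bv A T e1 - Bv A T e2))\<^sup>2"
  proof -
    have d1: "2 * inner (Bv A T e1) (Bv A T e2) = (norm (Bv A T e1 + Bv A T e2))\<^sup>2 - (norm (Bv A T e1))\<^sup>2 - (norm (Bv A T e2))\<^sup>2"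
      by (subst dot_norm) simp
    have d2: "2 * inner (Bv A T e1) (Bv A T e2) = (norm (Bv A T e1))\<^sup>2 + (norm (Bv A T e2))\<^sup>2 - (norm (Bv A T e1 - Bv A T e2))\<^sup>2"
      by (subst dot_norm_neg) simp
    show ?thesis using d1 d2 by linarith
  qed
  have ie: "\<bar>inner (Bv A T e1) (Bv A T e2)\<bar> \<le> \<delta>" 
    using aux_ineq[OF up lo id] aux_ineq[OF up2 lo2, of "- inner (Bv A T e1) (Bv A T e2)"] id by (simp add: abs_le_iff)
  have "inner (Bv A T b1) (Bv A T b2) = n1 * n2 * inner (Bv A T e1) (Bv A T e2)"
    unfolding b1e b2e Bv_scale[OF fr] by simp
  hence "\<bar>inner (Bv A T b1) (Bv A T b2)\<bar> = n1 * n2 * \<bar>inner (Bv A T e1) (Bv A T e2)\<bar>"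
    using n1 n2 by (simp add: abs_mult)
  also have "\<dots> \<le> n1 * n2 * \<delta>" using ie n1 n2 by simp
  finally show ?thesis unfolding n1_def n2_def by (simp add: mult.commute mult.left_commute)
qed



definition rs :: "('m \<Rightarrow> real) \<Rightarrow> 'm set \<Rightarrow> 'm \<Rightarrow> real" where
  "rs h Q = (\<lambda>j. if j \<in> Q then h j else 0)"

lemma top_sel:
  fixes h :: "'m \<Rightarrow> real"
  assumes fin: "finite R"
  shows "\<exists>Q\<subseteq>R. card Q = min s (card R) \<and> (\<forall>a\<in>Q. \<forall>b\<in>R-Q. \<bar>h b\<bar> \<le> \<bar>h a\<bar>)"
proof (induction s)
  case 0 thus ?case by (intro exI[of _ "{}"]) simp
next
  case (Suc s)
  then obtain Q where Q: "Q \<subseteq> R" "card Q = min s (card R)" "\<forall>a\<in>Q. \<forall>b\<in>R-Q. \<bar>h b\<bar> \<le> \<bar>h a\<bar>" by blast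
  show ?case
  proof (cases "card R \<le> s")
    case True
    thus ?thesis using Q by (intro exI[of _ Q]) auto
  next
    case False
    hence cQ: "card Q = s" using Q(2) by simp
    have "Q \<noteq> R" using False cQ by auto
    hence ne: "R - Q \<noteq> {}" using Q(1) by auto
    have finRQ: "finite (R - Q)" using fin by simp
    define M where "M = Max ((\<lambda>j. \<bar>h j\<bar>) ` (R - Q))"
    have "M \<in> (\<lambda>j. \<bar>h j\<bar>) ` (R - Q)" unfolding M_def using ne finRQ by (intro Max_in) auto
    then obtain b0 where b0: "b0 \<in> R - Q" "\<bar>h b0\<bar> = M" by auto
    have mx: "\<forall>b\<in>R-Q. \<bar>h b\<bar> \<le> \<bar>h b0\<bar>" unfolding b0(2) M_def using finRQ by auto
    have fQ: "finite Q" using Q(1) fin finite_subset by blast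
    have c: "card (insert b0 Q) = Suc s" using b0(1) fQ cQ by simp
    show ?thesis
    proof (intro exI[of _ "insert b0 Q"] conjI)
      show "insert b0 Q \<subseteq> R" using Q(1) b0(1) by auto
      show "card (insert b0 Q) = min (Suc s) (card R)" using c False by simp
      show "\<forall>a\<in>insert b0 Q. \<forall>b\<in>R - insert b0 Q. \<bar>h b\<bar> \<le> \<bar>h a\<bar>" using Q(3) mx by auto
    qed
  qed
qed

lemma sum_abs_le_L2: "finite S \<Longrightarrow> (\<Sum>j\<in>S. \<bar>h j\<bar>) \<le> sqrt (real (card S)) * sqrt (\<Sum>j\<in>S. (h j)\<^sup>2)"
proof -
  assume "finite S"
  have "(\<Sum>j\<in>S. \<bar>h j\<bar> * \<bar>(\<lambda>_. 1::real) j\<bar>) \<le> L2_set h S * L2_set (\<lambda>_. 1::real) S"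
    by (rule L2_set_mult_ineq)
  thus ?thesis unfolding L2_set_def by (simp add: mult.commute)
qed

lemma blocks:
  fixes h :: "'m \<Rightarrow> real"
  assumes "finite R" "s > 0" "m \<ge> 0" "\<forall>a\<in>R. \<bar>h a\<bar> \<le> m"
  shows "\<exists>Qs. (\<forall>Q\<in>set Qs. Q \<subseteq> R \<and> card Q \<le> s) \<and>
     (\<forall>j. rs h R j = sum_list (map (\<lambda>Q. rs h Q j) Qs)) \<and>
     sum_list (map (\<lambda>Q. sqrt (\<Sum>j\<in>Q. (h j)\<^sup>2)) Qs) \<le> sqrt s * m + (\<Sum>a\<in>R. \<bar>h a\<bar>) / sqrt s"
  using assms
proof (induction "card R" arbitrary: R m rule: less_induct)
  case less
  note fin = less.prems(1) and sp = less.prems(2) and m0 = less.prems(3) and bd = less.prems(4)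
  show ?case
  proof (cases "R = {}")
    case True
    thus ?thesis using m0 by (intro exI[of _ "[]"]) (simp add: rs_def)
  next
    case False
    obtain Q where Q: "Q \<subseteq> R" "card Q = min s (card R)" "\<forall>a\<in>Q. \<forall>b\<in>R-Q. \<bar>h b\<bar> \<le> \<bar>h a\<bar>"
      using top_sel[OF fin] by blast
    have fQ: "finite Q" using Q(1) fin finite_subset by blast
    have cR: "card R > 0" using False fin by (simp add: card_gt_0_iff)
    hence cQ: "card Q > 0" using Q(2) sp by simp
    hence Qne: "Q \<noteq> {}" by auto
    define R' where "R' = R - Q"
    have cd: "card R' = card R - card Q" unfolding R'_def by (rule card_Diff_subset[OF fQ Q(1)])
    have lt: "card R' < card R" using cd cQ cR by arith
    define m' where "m' = (if card Q = s then (\<Sum>a\<in>Q. \<bar>h a\<bar>) / s else 0)"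
    have m'0: "m' \<ge> 0" unfolding m'_def by (simp add: sum_nonneg)
    have bd': "\<forall>a\<in>R'. \<bar>h a\<bar> \<le> m'"
    proof
      fix b assume b: "b \<in> R'"
      show "\<bar>h b\<bar> \<le> m'"
      proof (cases "card Q = s")
        case True
        have "real s * \<bar>h b\<bar> = (\<Sum>a\<in>Q. \<bar>h b\<bar>)" using True by simp
        also have "\<dots> \<le> (\<Sum>a\<in>Q. \<bar>h a\<bar>)" using Q(3) b unfolding R'_def by (intro sum_mono) auto
        finally show ?thesis unfolding m'_def using True sp by (simp add: field_simps)
      next
        case False
        hence "card Q = card R" using Q(2) by simp
        hence "Q = R" using Q(1) fin by (simp add: card_subset_eq)
        thus ?thesis using b unfolding R'_def by simp
      qed
    qed
    have finR': "finite R'" unfolding R'_def using fin by simp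
    obtain Qs where Qs: "\<forall>Q\<in>set Qs. Q \<subseteq> R' \<and> card Q \<le> s"
        "\<forall>j. rs h R' j = sum_list (map (\<lambda>Q. rs h Q j) Qs)"
        "sum_list (map (\<lambda>Q. sqrt (\<Sum>j\<in>Q. (h j)\<^sup>2)) Qs) \<le> sqrt s * m' + (\<Sum>a\<in>R'. \<bar>h a\<bar>) / sqrt s"
      using less.hyps[OF lt finR' sp m'0 bd'] by blast
    have L2Q: "sqrt (\<Sum>j\<in>Q. (h j)\<^sup>2) \<le> sqrt s * m"
    proof -
      have "(\<Sum>j\<in>Q. (h j)\<^sup>2) \<le> (\<Sum>j\<in>Q. m\<^sup>2)"
        using bd Q(1) by (intro sum_mono) (metis abs_ge_zero power_mono power2_abs subsetD)
      also have "\<dots> = card Q * m\<^sup>2" by simp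
      also have "\<dots> \<le> s * m\<^sup>2" using Q(2) by (intro mult_right_mono) auto
      finally have "sqrt (\<Sum>j\<in>Q. (h j)\<^sup>2) \<le> sqrt (s * m\<^sup>2)" by (rule real_sqrt_le_mono)
      also have "\<dots> = sqrt s * m" using m0 by (simp add: real_sqrt_mult)
      finally show ?thesis .
    qed
    have m'b: "sqrt s * m' \<le> (\<Sum>a\<in>Q. \<bar>h a\<bar>) / sqrt s"
    proof (cases "card Q = s")
      case True
      have "sqrt s * m' = sqrt s * ((\<Sum>a\<in>Q. \<bar>h a\<bar>) / (sqrt s * sqrt s))" unfolding m'_def using True by simp
      also have "\<dots> = (\<Sum>a\<in>Q. \<bar>h a\<bar>) / sqrt s" using sp by (simp add: field_simps)
      finally show ?thesis by simp
    next
      case False thus ?thesis unfolding m'_def by (simp add: sum_nonneg)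
    qed
    have split: "(\<Sum>a\<in>R. \<bar>h a\<bar>) = (\<Sum>a\<in>Q. \<bar>h a\<bar>) + (\<Sum>a\<in>R'. \<bar>h a\<bar>)"
      unfolding R'_def using Q(1) fin by (metis add.commute sum.subset_diff)
    show ?thesis
    proof (intro exI[of _ "Q # Qs"] conjI)
      show "\<forall>Qa\<in>set (Q # Qs). Qa \<subseteq> R \<and> card Qa \<le> s" using Qs(1) Q(1,2) unfolding R'_def by auto
      show "\<forall>j. rs h R j = sum_list (map (\<lambda>Q. rs h Q j) (Q # Qs))"
      proof
        fix j
        have "rs h R j = rs h Q j + rs h R' j" unfolding rs_def R'_def using Q(1) by auto
        thus "rs h R j = sum_list (map (\<lambda>Q. rs h Q j) (Q # Qs))" using Qs(2) by simp
      qed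
      have "sum_list (map (\<lambda>Q. sqrt (\<Sum>j\<in>Q. (h j)\<^sup>2)) (Q # Qs)) =
          sqrt (\<Sum>j\<in>Q. (h j)\<^sup>2) + sum_list (map (\<lambda>Q. sqrt (\<Sum>j\<in>Q. (h j)\<^sup>2)) Qs)" by simp
      also have "\<dots> \<le> sqrt s * m + ((\<Sum>a\<in>Q. \<bar>h a\<bar>) / sqrt s + (\<Sum>a\<in>R'. \<bar>h a\<bar>) / sqrt s)"
        using L2Q Qs(3) m'b by linarith
      also have "\<dots> = sqrt s * m + (\<Sum>a\<in>R. \<bar>h a\<bar>) / sqrt s" unfolding split by (simp add: add_divide_distrib)
      finally show "sum_list (map (\<lambda>Q. sqrt (\<Sum>j\<in>Q. (h j)\<^sup>2)) (Q # Qs)) \<le> sqrt s * m + (\<Sum>a\<in>R. \<bar>h a\<bar>) / sqrt s" .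
    qed
  qed
qed



lemma nq_rs: "Q \<subseteq> -T \<Longrightarrow> nq T (rs h Q) = (\<Sum>j\<in>Q. (h j)\<^sup>2)"
  unfolding nq_def rs_def
  by (subst sum.mono_neutral_right[of "-T" Q]) (auto simp: if_distrib cong: sum.cong)

lemma card_rs: "finite Q \<Longrightarrow> card {j. rs h Q j \<noteq> 0} \<le> card Q"
  unfolding rs_def by (intro card_mono) auto

lemma nsp:
  fixes A :: "real^'m^'n" and h :: "'m \<Rightarrow> real"
  assumes fr: "full_col_rank A T" and ok: "partial_RIC_ok A k (2 * s) \<delta>" and cT: "card T = k"
    and d0: "0 \<le> \<delta>" and d1: "\<delta> < 1" and sp: "s > 0"
    and S: "S \<subseteq> -T" "card S \<le> s" and hz: "Bv A T h = 0"
  shows "(\<Sum>j\<in>S. \<bar>h j\<bar>) * (1 - \<delta>) \<le> sqrt 2 * \<delta> * (\<Sum>j\<in>-T-S. \<bar>h j\<bar>)"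
proof -
  define R0 where "R0 = -T - S"
  have finR0: "finite R0" by simp
  obtain T1 where T1: "T1 \<subseteq> R0" "card T1 = min s (card R0)" "\<forall>a\<in>T1. \<forall>b\<in>R0-T1. \<bar>h b\<bar> \<le> \<bar>h a\<bar>"
    using top_sel[OF finR0] by blast
  define R where "R = R0 - T1"
  define m where "m = (if card T1 = s then (\<Sum>a\<in>T1. \<bar>h a\<bar>) / s else 0)"
  have m0: "m \<ge> 0" unfolding m_def by (simp add: sum_nonneg)
  have bdm: "\<forall>a\<in>R. \<bar>h a\<bar> \<le> m"
  proof
    fix b assume b: "b \<in> R"
    show "\<bar>h b\<bar> \<le> m"
    proof (cases "card T1 = s")
      case True
      have "real s * \<bar>h b\<bar> = (\<Sum>a\<in>T1. \<bar>h b\<bar>)" using True by simp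
      also have "\<dots> \<le> (\<Sum>a\<in>T1. \<bar>h a\<bar>)" using T1(3) b unfolding R_def by (intro sum_mono) auto
      finally show ?thesis unfolding m_def using True sp by (simp add: field_simps)
    next
      case False
      hence "card T1 = card R0" using T1(2) by simp
      hence "T1 = R0" using T1(1) finR0 by (simp add: card_subset_eq)
      thus ?thesis using b unfolding R_def by simp
    qed
  qed
  obtain Qs where Qs: "\<forall>Q\<in>set Qs. Q \<subseteq> R \<and> card Q \<le> s"
      "\<forall>j. rs h R j = sum_list (map (\<lambda>Q. rs h Q j) Qs)"
      "sum_list (map (\<lambda>Q. sqrt (\<Sum>j\<in>Q. (h j)\<^sup>2)) Qs) \<le> sqrt s * m + (\<Sum>a\<in>R. \<bar>h a\<bar>) / sqrt s"
    using blocks[of R s m h] sp m0 bdm by (auto simp: R_def)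
  define W where "W = sum_list (map (\<lambda>Q. sqrt (\<Sum>j\<in>Q. (h j)\<^sup>2)) Qs)"
  define V where "V = (\<Sum>j\<in>R0. \<bar>h j\<bar>)"
  have WV: "W * sqrt s \<le> V"
  proof -
    have split: "V = (\<Sum>a\<in>T1. \<bar>h a\<bar>) + (\<Sum>a\<in>R. \<bar>h a\<bar>)"
      unfolding V_def R_def using T1(1) finR0 by (metis add.commute sum.subset_diff)
    have mb: "sqrt s * m * sqrt s \<le> (\<Sum>a\<in>T1. \<bar>h a\<bar>)"
    proof (cases "card T1 = s")
      case True
      have "sqrt s * m * sqrt s = m * (sqrt s * sqrt s)" by (simp add: algebra_simps)
      also have "\<dots> = m * s" by simp
      also have "\<dots> = (\<Sum>a\<in>T1. \<bar>h a\<bar>)" unfolding m_def using True sp by simp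
      finally show ?thesis by simp
    next
      case False thus ?thesis unfolding m_def by (simp add: sum_nonneg)
    qed
    have "W * sqrt s \<le> (sqrt s * m + (\<Sum>a\<in>R. \<bar>h a\<bar>) / sqrt s) * sqrt s"
      using Qs(3) unfolding W_def by (intro mult_right_mono) auto
    also have "\<dots> = sqrt s * m * sqrt s + (\<Sum>a\<in>R. \<bar>h a\<bar>)" using sp by (simp add: field_simps)
    finally show ?thesis using mb split by linarith
  qed
  have ST1: "S \<inter> T1 = {}" using T1(1) unfolding R0_def by auto
  have T1T: "T1 \<subseteq> -T" using T1(1) unfolding R0_def by auto
  have RT: "R \<subseteq> -T" unfolding R_def R0_def by auto
  have QR: "Q \<subseteq> -T" "S \<inter> Q = {}" "T1 \<inter> Q = {}" "card Q \<le> s" if "Q \<in> set Qs" for Q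
    using Qs(1) that unfolding R_def R0_def by auto
  define g0 where "g0 = rs h S"
  define g1 where "g1 = rs h T1"
  define a where "a = Bv A T g0"
  define b where "b = Bv A T g1"
  define c where "c = (\<lambda>Q. Bv A T (rs h Q))"
  have decomp: "h j = g0 j + g1 j + sum_list (map (\<lambda>Q. rs h Q j) Qs)" if "j \<in> -T" for j
  proof -
    have "h j = g0 j + g1 j + rs h R j" unfolding g0_def g1_def rs_def R_def R0_def using that ST1 by auto
    thus ?thesis using Qs(2) by simp
  qed
  have "0 = Bv A T (\<lambda>j. g0 j + g1 j + sum_list (map (\<lambda>Q. rs h Q j) Qs))"
    using hz Bv_cong[of T h "\<lambda>j. g0 j + g1 j + sum_list (map (\<lambda>Q. rs h Q j) Qs)" A] decomp by simp
  also have "\<dots> = a + b + sum_list (map c Qs)"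
    unfolding a_def b_def c_def Bv_add[OF fr] Bv_sum_list[OF fr] by simp
  finally have abc: "a + b = - sum_list (map c Qs)" by (simp add: eq_neg_iff_add_eq_0)
  define n0 where "n0 = sqrt (\<Sum>j\<in>S. (h j)\<^sup>2)"
  define n1 where "n1 = sqrt (\<Sum>j\<in>T1. (h j)\<^sup>2)"
  have nq0: "nq T g0 = (\<Sum>j\<in>S. (h j)\<^sup>2)" unfolding g0_def using S(1) by (rule nq_rs)
  have nq1: "nq T g1 = (\<Sum>j\<in>T1. (h j)\<^sup>2)" unfolding g1_def using T1T by (rule nq_rs)
  have finS: "finite S" by simp
  have cT1: "card T1 \<le> s" using T1(2) by simp
  have z0: "\<forall>j\<in>T. g0 j = 0" unfolding g0_def rs_def using S(1) by auto
  have z1: "\<forall>j\<in>T. g1 j = 0" unfolding g1_def rs_def using T1T by auto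
  have c0: "card {j. g0 j \<noteq> 0} \<le> s" unfolding g0_def using card_rs[OF finS, of h] S(2) by linarith
  have c1: "card {j. g1 j \<noteq> 0} \<le> s" unfolding g1_def using card_rs[of T1 h] cT1 by simp
  have bnd: "\<bar>inner a (c Q)\<bar> + \<bar>inner b (c Q)\<bar> \<le> \<delta> * (n0 + n1) * sqrt (\<Sum>j\<in>Q. (h j)\<^sup>2)"
    if Q: "Q \<in> set Qs" for Q
  proof -
    have zQ: "\<forall>j\<in>T. rs h Q j = 0" unfolding rs_def using QR(1)[OF Q] by auto
    have cQ: "card {j. rs h Q j \<noteq> 0} \<le> s" using card_rs[of Q h] QR(4)[OF Q] by simp
    have nqQ: "nq T (rs h Q) = (\<Sum>j\<in>Q. (h j)\<^sup>2)" using QR(1)[OF Q] by (rule nq_rs)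
    have d0Q: "\<forall>j. g0 j = 0 \<or> rs h Q j = 0" unfolding g0_def rs_def using QR(2)[OF Q] by auto
    have d1Q: "\<forall>j. g1 j = 0 \<or> rs h Q j = 0" unfolding g1_def rs_def using QR(3)[OF Q] by auto
    have i0: "\<bar>inner a (c Q)\<bar> \<le> \<delta> * n0 * sqrt (\<Sum>j\<in>Q. (h j)\<^sup>2)"
      using polar[OF fr ok cT z0 zQ c0 cQ d0Q] unfolding a_def c_def nq0 nqQ n0_def .
    have i1: "\<bar>inner b (c Q)\<bar> \<le> \<delta> * n1 * sqrt (\<Sum>j\<in>Q. (h j)\<^sup>2)"
      using polar[OF fr ok cT z1 zQ c1 cQ d1Q] unfolding b_def c_def nq1 nqQ n1_def .
    show ?thesis using i0 i1 by (simp add: algebra_simps)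
  qed
  have "(norm (a + b))\<^sup>2 = inner (a + b) (a + b)" by (simp add: power2_norm_eq_inner)
  also have "\<dots> = - inner (a + b) (sum_list (map c Qs))" by (subst (2) abc) simp
  also have "\<dots> = - sum_list (map (\<lambda>Q. inner a (c Q) + inner b (c Q)) Qs)"
    by (induction Qs) (simp_all add: inner_add_left inner_add_right algebra_simps)
  also have "\<dots> \<le> sum_list (map (\<lambda>Q. \<delta> * (n0 + n1) * sqrt (\<Sum>j\<in>Q. (h j)\<^sup>2)) Qs)"
    using bnd
  proof (induction Qs)
    case Nil thus ?case by simp
  next
    case (Cons Q Qs)
    have "- (inner a (c Q) + inner b (c Q)) \<le> \<delta> * (n0 + n1) * sqrt (\<Sum>j\<in>Q. (h j)\<^sup>2)"
      using Cons.prems[of Q] by simp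
    thus ?case using Cons by simp
  qed
  also have "\<dots> = \<delta> * (n0 + n1) * W" unfolding W_def
    by (induction Qs) (simp_all add: algebra_simps)
  finally have up: "(norm (a + b))\<^sup>2 \<le> \<delta> * (n0 + n1) * W" .
  define g01 where "g01 = rs h (S \<union> T1)"
  have ab: "a + b = Bv A T g01"
  proof -
    have "Bv A T g01 = Bv A T (\<lambda>j. g0 j + g1 j)"
      by (rule Bv_cong) (use ST1 in \<open>auto simp: g01_def g0_def g1_def rs_def\<close>)
    thus ?thesis unfolding a_def b_def Bv_add[OF fr] by simp
  qed
  have nq01: "nq T g01 = n0\<^sup>2 + n1\<^sup>2"
  proof -
    have "nq T g01 = (\<Sum>j\<in>S \<union> T1. (h j)\<^sup>2)" unfolding g01_def using S(1) T1T by (intro nq_rs) auto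
    also have "\<dots> = (\<Sum>j\<in>S. (h j)\<^sup>2) + (\<Sum>j\<in>T1. (h j)\<^sup>2)" using ST1 by (intro sum.union_disjoint) auto
    finally show ?thesis unfolding n0_def n1_def by (simp add: sum_nonneg)
  qed
  have z01: "\<forall>j\<in>T. g01 j = 0" unfolding g01_def rs_def using S(1) T1T by auto
  have c01: "card {j. g01 j \<noteq> 0} \<le> 2 * s"
  proof -
    have "card {j. g01 j \<noteq> 0} \<le> card (S \<union> T1)" unfolding g01_def by (rule card_rs) simp
    also have "\<dots> \<le> card S + card T1" by (rule card_Un_le)
    finally show ?thesis using S(2) cT1 by linarith
  qed
  have lo: "(1 - \<delta>) * (n0\<^sup>2 + n1\<^sup>2) \<le> (norm (a + b))\<^sup>2"
    using ric_apply[OF ok cT z01 c01] unfolding ab nq01 by blast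
  define N where "N = sqrt (n0\<^sup>2 + n1\<^sup>2)"
  have n0p: "n0 \<ge> 0" "n1 \<ge> 0" unfolding n0_def n1_def by (simp_all add: sum_nonneg)
  have NN: "N\<^sup>2 = n0\<^sup>2 + n1\<^sup>2" unfolding N_def by simp
  have n01: "n0 + n1 \<le> sqrt 2 * N"
  proof -
    have "0 \<le> (n0 - n1)\<^sup>2" by simp
    hence "(n0 + n1)\<^sup>2 \<le> 2 * (n0\<^sup>2 + n1\<^sup>2)" by (simp add: power2_eq_square algebra_simps)
    also have "\<dots> = (sqrt 2 * N)\<^sup>2" unfolding power_mult_distrib NN by simp
    finally show ?thesis by (rule power2_le_imp_le) (simp add: N_def)
  qed
  have n0N: "n0 \<le> N"
  proof -
    have "sqrt (n0\<^sup>2) \<le> N" unfolding N_def by (rule real_sqrt_le_mono) simp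
    thus ?thesis using n0p by simp
  qed
  have W0: "W \<ge> 0" unfolding W_def by (induction Qs) (auto intro!: add_nonneg_nonneg sum_nonneg)
  have key: "(1 - \<delta>) * N\<^sup>2 \<le> sqrt 2 * \<delta> * N * W"
  proof -
    have "(1 - \<delta>) * N\<^sup>2 \<le> \<delta> * (n0 + n1) * W" using lo up NN by simp
    also have "\<dots> \<le> \<delta> * (sqrt 2 * N) * W" using n01 d0 W0 by (intro mult_right_mono mult_left_mono) auto
    finally show ?thesis by (simp add: algebra_simps)
  qed
  have N0: "N \<ge> 0" unfolding N_def by simp
  have "(1 - \<delta>) * N \<le> sqrt 2 * \<delta> * W"
  proof (cases "N = 0")
    case True thus ?thesis using d0 W0 by simp
  next
    case False
    hence "N > 0" using N0 by simp
    have "N * ((1 - \<delta>) * N) \<le> N * (sqrt 2 * \<delta> * W)" using key by (simp add: power2_eq_square algebra_simps)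
    thus ?thesis using \<open>N > 0\<close> by (simp only: mult_le_cancel_left_pos)
  qed
  hence k2: "(1 - \<delta>) * N * sqrt s \<le> sqrt 2 * \<delta> * V"
  proof -
    assume "(1 - \<delta>) * N \<le> sqrt 2 * \<delta> * W"
    hence "(1 - \<delta>) * N * sqrt s \<le> sqrt 2 * \<delta> * W * sqrt s" by (intro mult_right_mono) auto
    also have "\<dots> \<le> sqrt 2 * \<delta> * V" using WV d0 by (simp add: mult.assoc mult_left_mono)
    finally show ?thesis .
  qed
  have "(\<Sum>j\<in>S. \<bar>h j\<bar>) \<le> sqrt (card S) * n0" unfolding n0_def using finS by (rule sum_abs_le_L2)
  also have "\<dots> \<le> sqrt s * N" using S(2) n0N n0p by (intro mult_mono) auto
  finally have "(\<Sum>j\<in>S. \<bar>h j\<bar>) * (1 - \<delta>) \<le> sqrt s * N * (1 - \<delta>)" using d1 by (intro mult_right_mono) auto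
  also have "\<dots> \<le> sqrt 2 * \<delta> * V" using k2 by (simp add: algebra_simps)
  finally show ?thesis unfolding V_def R0_def .
qed



lemma ok_large:
  fixes A :: "real^'m^'n"
  assumes ex: "partial_RIC_exists A k"
  shows "partial_RIC_ok A k s (max 1 ((\<Sum>j\<in>UNIV. norm (column j A))\<^sup>2))"
  unfolding partial_RIC_ok_def
proof (intro allI impI conjI)
  fix T' :: "'m set" and b' :: "'m \<Rightarrow> real"
  assume cT: "card T' = k" and zb: "\<forall>j\<in>T'. b' j = 0" and cs: "card {j. b' j \<noteq> 0} \<le> s"
  define K where "K = (\<Sum>j\<in>UNIV. norm (column j A))"
  define d where "d = max 1 (K\<^sup>2)"
  define q where "q = (\<Sum>j\<in>-T'. (b' j)\<^sup>2)"
  have q0: "q \<ge> 0" unfolding q_def by (simp add: sum_nonneg)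
  have fr: "full_col_rank A T'" using ex cT unfolding partial_RIC_exists_def by blast
  show "(1 - max 1 ((\<Sum>j\<in>UNIV. norm (column j A))\<^sup>2)) * (\<Sum>j\<in>- T'. (b' j)\<^sup>2)
        \<le> (norm (proj_perp A T' (colcomb A (- T') b')))\<^sup>2"
  proof -
    have "(1 - max 1 ((\<Sum>j\<in>UNIV. norm (column j A))\<^sup>2)) * q \<le> 0" using q0
      by (intro mult_nonpos_nonneg) auto
    thus ?thesis unfolding q_def by (meson order_trans zero_le_power2)
  qed
  have bj: "\<bar>b' j\<bar> \<le> sqrt q" if "j \<in> -T'" for j
  proof -
    have "(b' j)\<^sup>2 \<le> q" unfolding q_def using that by (intro member_le_sum) auto
    hence "sqrt ((b' j)\<^sup>2) \<le> sqrt q" by (rule real_sqrt_le_mono)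
    thus ?thesis by simp
  qed
  have "norm (proj_perp A T' (colcomb A (- T') b')) \<le> norm (colcomb A (- T') b')" by (rule proj_norm[OF fr])
  also have "\<dots> \<le> (\<Sum>j\<in>-T'. norm (b' j *\<^sub>R column j A))" unfolding colcomb_def by (rule norm_sum)
  also have "\<dots> = (\<Sum>j\<in>-T'. \<bar>b' j\<bar> * norm (column j A))" by simp
  also have "\<dots> \<le> (\<Sum>j\<in>-T'. sqrt q * norm (column j A))" using bj by (intro sum_mono mult_right_mono) auto
  also have "\<dots> = sqrt q * (\<Sum>j\<in>-T'. norm (column j A))" by (simp add: sum_distrib_left)
  also have "\<dots> \<le> sqrt q * K" unfolding K_def using q0 by (intro mult_left_mono sum_mono2) auto
  finally have nb: "norm (proj_perp A T' (colcomb A (- T') b')) \<le> sqrt q * K" .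
  have "(norm (proj_perp A T' (colcomb A (- T') b')))\<^sup>2 \<le> (sqrt q * K)\<^sup>2" using nb by (intro power_mono) auto
  also have "\<dots> = q * K\<^sup>2" using q0 by (simp add: power_mult_distrib)
  also have "\<dots> \<le> (1 + d) * q" unfolding d_def using q0 by (simp add: mult.commute mult_left_mono)
  finally show "(norm (proj_perp A T' (colcomb A (- T') b')))\<^sup>2
        \<le> (1 + max 1 ((\<Sum>j\<in>UNIV. norm (column j A))\<^sup>2)) * (\<Sum>j\<in>- T'. (b' j)\<^sup>2)"
    unfolding d_def K_def q_def .
qed

lemma zero_contra:
  fixes A :: "real^'m^'n"
  assumes fr: "full_col_rank A T" and Ah: "A *v hv = 0" and z: "\<forall>j\<in>-T. hv $ j = 0"
  shows "hv = 0"
proof -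
  have "colcomb A (-T) (\<lambda>j. hv $ j) = colcomb A (-T) (\<lambda>j. 0)" by (rule colcomb_cong) (use z in auto)
  hence "colcomb A (-T) (\<lambda>j. hv $ j) = 0" by (simp add: colcomb_zero)
  hence "colcomb A T (\<lambda>j. hv $ j) = 0" using Ah unfolding mult_colcomb colcomb_split[of A _ T] by simp
  hence "\<forall>j\<in>T. hv $ j = 0" using fr unfolding full_col_rank_def by blast
  with z show ?thesis by (metis ComplI vec_eq_iff zero_index)
qed

theorem mainTheorem2:
  fixes A :: "real^'m^'n" and x :: "real^'m" and T :: "'m set" and k u :: nat
  assumes "card T = k"
    and "u = card ({j. x $ j \<noteq> 0} - T)"
    and "partial_RIC_exists A k"
    and "partial_RIC A k (2 * u) < sqrt 2 - 1"
  shows "\<forall>b::real^'m. A *v b = A *v x \<longrightarrow> b \<noteq> x \<longrightarrow>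
           (\<Sum>j\<in>-T. \<bar>x $ j\<bar>) < (\<Sum>j\<in>-T. \<bar>b $ j\<bar>)"
proof (intro allI impI)
  fix b :: "real^'m"
  assume Ab: "A *v b = A *v x" and bx: "b \<noteq> x"
  note cT = assms(1)
  have fr: "full_col_rank A T" using assms(1,3) unfolding partial_RIC_exists_def by blast
  define hv where "hv = b - x"
  have Ah: "A *v hv = 0" unfolding hv_def using Ab by (simp add: matrix_vector_mult_diff_distrib)
  define h where "h = (\<lambda>j. hv $ j)"
  have hz: "Bv A T h = 0" unfolding h_def by (rule Bv_null[OF fr Ah])
  have hne: "\<not> (\<forall>j\<in>-T. h j = 0)"
  proof
    assume "\<forall>j\<in>-T. h j = 0"
    hence "hv = 0" using zero_contra[OF fr Ah] unfolding h_def by blast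
    thus False using bx unfolding hv_def by simp
  qed
  define S where "S = {j. x $ j \<noteq> 0} - T"
  define R0 where "R0 = -T - S"
  have ST: "S \<subseteq> -T" unfolding S_def by auto
  have cS: "card S = u" unfolding S_def using assms(2) by simp
  have habs0: "\<forall>j\<in>-T. h j = 0" if "(\<Sum>j\<in>S. \<bar>h j\<bar>) = 0" "(\<Sum>j\<in>R0. \<bar>h j\<bar>) = 0"
  proof
    fix j assume j: "j \<in> -T"
    show "h j = 0"
    proof (cases "j \<in> S")
      case True thus ?thesis using that(1) by (subst (asm) sum_nonneg_eq_0_iff) auto
    next
      case False hence "j \<in> R0" using j unfolding R0_def by auto
      thus ?thesis using that(2) by (subst (asm) sum_nonneg_eq_0_iff) auto
    qed
  qed
  have V0: "(\<Sum>j\<in>R0. \<bar>h j\<bar>) \<ge> 0" "(\<Sum>j\<in>S. \<bar>h j\<bar>) \<ge> 0" by (simp_all add: sum_nonneg)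
  have claim: "(\<Sum>j\<in>S. \<bar>h j\<bar>) < (\<Sum>j\<in>R0. \<bar>h j\<bar>)"
  proof (cases "u = 0")
    case True
    hence "S = {}" using cS by simp
    hence "(\<Sum>j\<in>S. \<bar>h j\<bar>) = 0" by simp
    moreover have "(\<Sum>j\<in>R0. \<bar>h j\<bar>) \<noteq> 0" using habs0 hne calculation by blast
    ultimately show ?thesis using V0 by linarith
  next
    case False
    hence up: "u > 0" by simp
    then obtain j0 where j0: "j0 \<in> S" using cS by (metis card.empty ex_in_conv less_irrefl)
    define e where "e = (\<lambda>j. if j = j0 then 1 else (0::real))"
    have ze: "\<forall>j\<in>T. e j = 0" using j0 ST unfolding e_def by auto
    have ce: "card {j. e j \<noteq> 0} \<le> 2 * u"
    proof -
      have "{j. e j \<noteq> 0} = {j0}" unfolding e_def by auto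
      thus ?thesis using up by simp
    qed
    have nqe: "nq T e = 1"
    proof -
      have "nq T e = (\<Sum>j\<in>-T. if j = j0 then 1 else 0)" unfolding nq_def e_def by (rule sum.cong) auto
      thus ?thesis using j0 ST by auto
    qed
    define D where "D = {\<delta>. partial_RIC_ok A k (2 * u) \<delta>}"
    have Dbd: "1 - (norm (Bv A T e))\<^sup>2 \<le> \<delta> \<and> 0 \<le> \<delta>" if "\<delta> \<in> D" for \<delta>
      using ric_apply[of A k "2 * u" \<delta> T e] that cT ze ce nqe unfolding D_def by auto
    have Dne: "D \<noteq> {}" using ok_large[OF assms(3)] unfolding D_def by blast
    have Dbb: "bdd_below D" using Dbd by (meson bdd_belowI)
    have "Inf D < sqrt 2 - 1" using assms(4) unfolding partial_RIC_def D_def by simp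
    then obtain \<delta> where dD: "\<delta> \<in> D" and dl: "\<delta> < sqrt 2 - 1" using cInf_less_iff[OF Dne Dbb] by blast
    have d0: "0 \<le> \<delta>" using Dbd dD by blast
    have s2: "sqrt 2 < 2" by (smt (verit) real_sqrt_less_iff real_sqrt_four)
    have d1: "\<delta> < 1" using dl s2 by linarith
    have rho: "sqrt 2 * \<delta> < 1 - \<delta>"
    proof -
      have "(sqrt 2 + 1) * \<delta> < (sqrt 2 + 1) * (sqrt 2 - 1)" using dl by (intro mult_strict_left_mono) (auto intro: add_nonneg_pos)
      also have "\<dots> = 1" by (simp add: algebra_simps)
      finally show ?thesis by (simp add: algebra_simps)
    qed
    have ok: "partial_RIC_ok A k (2 * u) \<delta>" using dD unfolding D_def by simp
    have nsp: "(\<Sum>j\<in>S. \<bar>h j\<bar>) * (1 - \<delta>) \<le> sqrt 2 * \<delta> * (\<Sum>j\<in>R0. \<bar>h j\<bar>)"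
      unfolding R0_def using nsp[OF fr ok cT d0 d1 up ST _ hz] cS by simp
    show ?thesis
    proof (cases "(\<Sum>j\<in>R0. \<bar>h j\<bar>) = 0")
      case True
      hence "(\<Sum>j\<in>S. \<bar>h j\<bar>) * (1 - \<delta>) \<le> 0" using nsp by simp
      hence "(\<Sum>j\<in>S. \<bar>h j\<bar>) = 0" using d1 V0 by (simp add: mult_le_0_iff)
      thus ?thesis using habs0 hne True by blast
    next
      case False
      hence Vp: "(\<Sum>j\<in>R0. \<bar>h j\<bar>) > 0" using V0(1) by linarith
      have "(\<Sum>j\<in>S. \<bar>h j\<bar>) * (1 - \<delta>) < (\<Sum>j\<in>R0. \<bar>h j\<bar>) * (1 - \<delta>)"
        using nsp rho Vp by (smt (verit) mult.commute mult_strict_right_mono)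
      thus ?thesis using d1 by (simp add: mult_less_cancel_right)
    qed
  qed
  have finT: "finite (-T)" by simp
  have sx: "(\<Sum>j\<in>-T. \<bar>x $ j\<bar>) = (\<Sum>j\<in>S. \<bar>x $ j\<bar>)"
  proof -
    have "(\<Sum>j\<in>-T. \<bar>x $ j\<bar>) = (\<Sum>j\<in>R0. \<bar>x $ j\<bar>) + (\<Sum>j\<in>S. \<bar>x $ j\<bar>)"
      unfolding R0_def by (rule sum.subset_diff[OF ST finT])
    moreover have "(\<Sum>j\<in>R0. \<bar>x $ j\<bar>) = 0" unfolding R0_def S_def by (intro sum.neutral) auto
    ultimately show ?thesis by simp
  qed
  have sb: "(\<Sum>j\<in>-T. \<bar>b $ j\<bar>) = (\<Sum>j\<in>R0. \<bar>h j\<bar>) + (\<Sum>j\<in>S. \<bar>b $ j\<bar>)"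
  proof -
    have "(\<Sum>j\<in>-T. \<bar>b $ j\<bar>) = (\<Sum>j\<in>R0. \<bar>b $ j\<bar>) + (\<Sum>j\<in>S. \<bar>b $ j\<bar>)"
      unfolding R0_def by (rule sum.subset_diff[OF ST finT])
    moreover have "(\<Sum>j\<in>R0. \<bar>b $ j\<bar>) = (\<Sum>j\<in>R0. \<bar>h j\<bar>)"
      unfolding R0_def S_def h_def hv_def by (intro sum.cong) auto
    ultimately show ?thesis by simp
  qed
  have "(\<Sum>j\<in>S. \<bar>x $ j\<bar>) - (\<Sum>j\<in>S. \<bar>h j\<bar>) \<le> (\<Sum>j\<in>S. \<bar>b $ j\<bar>)"
  proof -
    have "(\<Sum>j\<in>S. \<bar>x $ j\<bar> - \<bar>h j\<bar>) \<le> (\<Sum>j\<in>S. \<bar>b $ j\<bar>)"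
      unfolding h_def hv_def by (intro sum_mono) auto
    thus ?thesis by (simp add: sum_subtractf)
  qed
  thus "(\<Sum>j\<in>-T. \<bar>x $ j\<bar>) < (\<Sum>j\<in>-T. \<bar>b $ j\<bar>)" using sx sb claim by linarith
qed

end
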